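(* For every state $s\in S$, the number of actions $I$ occurring in the unique path $\underline\alpha(s)$ equals the class $K(s)$.
   Context: Fix integers $M\ge1$, $q\ge 2$. The augmented state set is $\overline S=\{(b_1,\dots,b_M,d;T,t): b_m,d,T\in\mathbb Z,\ 1\le t\le M+1,\ d+T+\sum_{m=1}^M b_m=0\}$, the BDM state set is $S=\{s\in\overline S:0\le T\le M\}$, initial state $s_0=(0,\dots,0,0;0,M+1)$. Feasible transitions from $s=(b_1,\dots,b_M,d;T,t)\in S$: if $t\le M$ and $b_t>d$, action $D$ to $(b_1,\dots,b_{t-1},d,b_{t+1},\dots,b_M,b_t;T,t+1)$ or action $I$ to $(b_1,\dots,b_M,d;T,t+1)$; if $t\le M$ and $b_t=d$, action $N_=$ to $(b_1,\dots,b_M,d;T,t+1)$; if $t\le M$ and $b_t<d$, action $N_<$ to $(b_1,\dots,b_M,d;T,t+1)$; if $t=M+1,T<M$, action $d_-$ to $(b_1,\dots,b_M,d-1;T+1,1)$; if $t=M+1,T=M$, action $b_+$ to $(b_1+1,\dots,b_M+1,d;0,1)$. For each $s\in S$ there is exactly one finite path of feasible transitions from $s_0$ to $s$ that uses only actions from $\{D,I,N_=,d_-,b_+\}$ and visits $s_0$ only at its start; call it $\underline\alpha(s)$. For $s\in\overline S$ let $x=(b_1,\dots,b_{t-1},d,b_t,\dots,b_M)$, $\tilde b_1\ge\dots\ge\tilde b_{M+1}$ its entries sorted nonincreasingly, $\pi_s$ the minimum number of neighbouring transpositions sorting $x$ nonincreasingly, and $K(s)=-\pi_s+MT+2\sum_{m=1}^{M+1}\tilde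 b_m(M+1-m)$ the class of $s$. *)

theory Defs
  imports Main
begin

text \<open>A state (b_1..b_M, d; T, t) is represented as (bs, d, T, t) with
  bs the list [b_1, ..., b_M] (so b_m = bs ! (m-1)).\<close>
type_synonym state = "int list \<times> int \<times> int \<times> nat"

datatype action = ActD | ActI | ActNeq | ActNlt | ActDminus | ActBplus

definition aug_states :: "nat \<Rightarrow> state set" where
  "aug_states M = {(bs, d, T, t). length bs = M \<and> 1 \<le> t \<and> t \<le> M + 1 \<and>
                       d + T + sum_list bs = 0}"

definition bdm_states :: "nat \<Rightarrow> state set" where
  "bdm_states M = {(bs, d, T, t). (bs, d, T, t) \<in> aug_states M \<and> 0 \<le> T \<and> T \<le> int M}"

definition init_state :: "nat \<Rightarrow> state" where
  "init_state M = (replicate M 0, 0, 0, M + 1)"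

fun step :: "nat \<Rightarrow> state \<Rightarrow> action \<Rightarrow> state \<Rightarrow> bool" where
  "step M (bs, d, T, t) a s' \<longleftrightarrow>
     (t \<le> M \<and> bs ! (t - 1) > d \<and> a = ActD \<and> s' = (bs[t - 1 := d], bs ! (t - 1), T, t + 1)) \<or>
     (t \<le> M \<and> bs ! (t - 1) > d \<and> a = ActI \<and> s' = (bs, d, T, t + 1)) \<or>
     (t \<le> M \<and> bs ! (t - 1) = d \<and> a = ActNeq \<and> s' = (bs, d, T, t + 1)) \<or>
     (t \<le> M \<and> bs ! (t - 1) < d \<and> a = ActNlt \<and> s' = (bs, d, T, t + 1)) \<or>
     (t = M + 1 \<and> T < int M \<and> a = ActDminus \<and> s' = (bs, d - 1, T + 1, 1)) \<or>
     (t = M + 1 \<and> T = int M \<and> a = ActBplus \<and> s' = (map (\<lambda>x. x + 1) bs, d, 0, 1))"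

fun is_path :: "nat \<Rightarrow> state \<Rightarrow> (action \<times> state) list \<Rightarrow> bool" where
  "is_path M s [] = True"
| "is_path M s ((a, s') # rest) \<longleftrightarrow> s \<in> bdm_states M \<and> step M s a s' \<and> is_path M s' rest"

definition path_end :: "state \<Rightarrow> (action \<times> state) list \<Rightarrow> state" where
  "path_end s p = (if p = [] then s else snd (last p))"

definition good_path :: "nat \<Rightarrow> state \<Rightarrow> (action \<times> state) list \<Rightarrow> bool" where
  "good_path M s p \<longleftrightarrow> is_path M (init_state M) p \<and> path_end (init_state M) p = s \<and>
     (\<forall>(a, u) \<in> set p. a \<in> {ActD, ActI, ActNeq, ActDminus, ActBplus} \<and> u \<noteq> init_state M)"

definition alpha :: "nat \<Rightarrow> state \<Rightarrow> (action \<times> state) list" where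
  "alpha M s = (THE p. good_path M s p)"

definition count_I :: "(action \<times> state) list \<Rightarrow> nat" where
  "count_I p = length (filter (\<lambda>(a, _). a = ActI) p)"

definition xvec :: "state \<Rightarrow> int list" where
  "xvec s = (case s of (bs, d, T, t) \<Rightarrow> take (t - 1) bs @ [d] @ drop (t - 1) bs)"

definition adj_swap :: "nat \<Rightarrow> int list \<Rightarrow> int list" where
  "adj_swap i xs = xs[i := xs ! Suc i, Suc i := xs ! i]"

definition min_adj_swaps :: "int list \<Rightarrow> nat" where
  "min_adj_swaps xs = (LEAST n. \<exists>is. length is = n \<and> (\<forall>i \<in> set is. Suc i < length xs) \<and>
        sorted_wrt (\<ge>) (fold adj_swap is xs))"

definition class_K :: "nat \<Rightarrow> state \<Rightarrow> int" where
  "class_K M s = (case s of (bs, d, T, t) \<Rightarrow>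
     (let x = xvec s; bt = rev (sort x) in
       - int (min_adj_swaps x) + int M * T +
       2 * (\<Sum>m = 1..M + 1. bt ! (m - 1) * int (M + 1 - m))))"

end

theory Submission
  imports Defs "HOL-Library.Multiset"
begin


fun pairsum :: "(int \<Rightarrow> int \<Rightarrow> int) \<Rightarrow> int list \<Rightarrow> int" where
  "pairsum g [] = 0"
| "pairsum g (a # xs) = sum_list (map (g a) xs) + pairsum g xs"

definition ff :: "int \<Rightarrow> int \<Rightarrow> int" where
  "ff a b = (if b \<le> a then a - b else b - a - 1)"

definition ind :: "int \<Rightarrow> int \<Rightarrow> int" where
  "ind a b = (if a < b then 1 else 0)"

definition absd :: "int \<Rightarrow> int \<Rightarrow> int" where
  "absd a b = \<bar>a - b\<bar>"

lemma adj_swap_Cons0: "adj_swap 0 (a # b # ys) = b # a # ys"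
  by (simp add: adj_swap_def)

lemma adj_swap_Cons_Suc: "adj_swap (Suc j) (a # xs) = a # adj_swap j xs"
  by (simp add: adj_swap_def)

lemma length_adj_swap[simp]: "length (adj_swap i xs) = length xs"
  by (simp add: adj_swap_def)

lemma sum_map_adj_swap:
  "Suc i < length xs \<Longrightarrow> sum_list (map (h::int\<Rightarrow>int) (adj_swap i xs)) = sum_list (map h xs)"
proof (induction xs arbitrary: i)
  case Nil then show ?case by simp
next
  case (Cons a xs)
  show ?case
  proof (cases i)
    case 0
    then obtain b ys where "xs = b # ys" using Cons.prems by (cases xs) auto
    then show ?thesis using 0 by (simp add: adj_swap_Cons0 add.left_commute)
  next
    case (Suc j)
    then show ?thesis using Cons by (simp add: adj_swap_Cons_Suc)
  qed
qed

lemma pairsum_adj_swap: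
  "Suc i < length xs \<Longrightarrow>
   pairsum g (adj_swap i xs) = pairsum g xs - g (xs!i) (xs!Suc i) + g (xs!Suc i) (xs!i)"
proof (induction xs arbitrary: i)
  case Nil then show ?case by simp
next
  case (Cons a xs)
  show ?case
  proof (cases i)
    case 0
    then obtain b ys where "xs = b # ys" using Cons.prems by (cases xs) auto
    then show ?thesis using 0 by (simp add: adj_swap_Cons0)
  next
    case (Suc j)
    then show ?thesis using Cons by (simp add: adj_swap_Cons_Suc sum_map_adj_swap)
  qed
qed

lemma pairsum_mid_swap:
  "pairsum g (P @ a # b # Q) = pairsum g (P @ b # a # Q) + g a b - g b a"
  by (induction P) auto

lemma pairsum_snoc: "pairsum g (xs @ [d]) = pairsum g xs + sum_list (map (\<lambda>y. g y d) xs)"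
  by (induction xs) auto

lemma pairsum_shift:
  assumes "\<And>a b. g (a+1) (b+1) = g a b"
  shows "pairsum g (map (\<lambda>x. x + 1) xs) = pairsum g xs"
  by (induction xs) (auto simp: assms o_def)

lemma pairsum_diff:
  "pairsum (\<lambda>a b. g a b - h a b) xs = pairsum g xs - pairsum h xs"
  by (induction xs) (auto simp: sum_list_subtractf)

lemma pairsum_nonneg:
  assumes "\<And>a b. g a b \<ge> 0" shows "pairsum g xs \<ge> 0"
  using assms by (induction xs) (auto intro!: add_nonneg_nonneg sum_list_nonneg)

lemma pairsum_ind0:
  "pairsum ind xs = 0 \<longleftrightarrow> sorted_wrt (\<ge>) xs"
proof (induction xs)
  case Nil then show ?case by simp
next
  case (Cons a xs)
  have n1: "sum_list (map (ind a) xs) \<ge> 0" by (auto intro!: sum_list_nonneg simp: ind_def)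
  have n2: "pairsum ind xs \<ge> 0" by (rule pairsum_nonneg) (simp add: ind_def)
  have "sum_list (map (ind a) xs) = 0 \<longleftrightarrow> (\<forall>y\<in>set (map (ind a) xs). y = 0)"
    by (rule sum_list_nonneg_eq_0_iff) (auto simp: ind_def)
  also have "\<dots> \<longleftrightarrow> (\<forall>y\<in>set xs. ind a y = 0)" by simp
  also have "\<dots> \<longleftrightarrow> (\<forall>y\<in>set xs. y \<le> a)"
    by (simp add: ind_def not_less)
  finally have "sum_list (map (ind a) xs) = 0 \<longleftrightarrow> (\<forall>y\<in>set xs. y \<le> a)" .
  then show ?case using n1 n2 Cons.IH by auto
qed


lemma ind_nonneg: "pairsum ind xs \<ge> 0"
  by (rule pairsum_nonneg) (simp add: ind_def)

lemma fold_lower: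
  "(\<forall>i\<in>set is. Suc i < length xs) \<Longrightarrow>
   pairsum ind (fold adj_swap is xs) \<ge> pairsum ind xs - int (length is)"
proof (induction "is" arbitrary: xs)
  case Nil then show ?case by simp
next
  case (Cons i "is")
  have "pairsum ind (adj_swap i xs) \<ge> pairsum ind xs - 1"
    using Cons.prems by (simp add: pairsum_adj_swap ind_def)
  moreover have "pairsum ind (fold adj_swap is (adj_swap i xs)) \<ge> pairsum ind (adj_swap i xs) - int (length is)"
    using Cons.prems by (intro Cons.IH) simp
  ultimately show ?case by simp
qed

lemma exists_sorting:
  "\<exists>is. length is = nat (pairsum ind xs) \<and> (\<forall>i\<in>set is. Suc i < length xs) \<and>
        sorted_wrt (\<ge>) (fold adj_swap is xs)"
proof (induction "nat (pairsum ind xs)" arbitrary: xs)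
  case 0
  then have "pairsum ind xs = 0" using ind_nonneg[of xs] by simp
  then show ?case using 0 by (auto simp: pairsum_ind0 intro!: exI[of _ "[]"])
next
  case (Suc n)
  then have "pairsum ind xs \<noteq> 0" by auto
  then have "\<not> sorted_wrt (\<ge>) xs" by (simp add: pairsum_ind0)
  then obtain i where i: "Suc i < length xs" "\<not> xs!i \<ge> xs!Suc i"
    by (auto simp: sorted_wrt_iff_nth_Suc_transp transp_def)
  have e: "pairsum ind (adj_swap i xs) = pairsum ind xs - 1"
    using i by (simp add: pairsum_adj_swap ind_def)
  have "n = nat (pairsum ind (adj_swap i xs))" using e Suc.hyps(2) by simp
  from Suc.hyps(1)[OF this] obtain "is" where
    "length is = nat (pairsum ind (adj_swap i xs))" "\<forall>j\<in>set is. Suc j < length (adj_swap i xs)"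
    "sorted_wrt (\<ge>) (fold adj_swap is (adj_swap i xs))" by blast
  then show ?case using i e Suc.hyps(2)
    by (intro exI[of _ "i # is"]) auto
qed

lemma min_adj_swaps_eq: "int (min_adj_swaps xs) = pairsum ind xs"
proof -
  obtain is0 where is0: "length is0 = nat (pairsum ind xs)" "\<forall>i\<in>set is0. Suc i < length xs"
        "sorted_wrt (\<ge>) (fold adj_swap is0 xs)" using exists_sorting by blast
  have "min_adj_swaps xs = nat (pairsum ind xs)"
    unfolding min_adj_swaps_def
  proof (rule Least_equality)
    show "\<exists>is. length is = nat (pairsum ind xs) \<and> (\<forall>i\<in>set is. Suc i < length xs) \<and>
        sorted_wrt (\<ge>) (fold adj_swap is xs)" using is0 by blast
  next
    fix y assume "\<exists>is. length is = y \<and> (\<forall>i\<in>set is. Suc i < length xs) \<and>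
        sorted_wrt (\<ge>) (fold adj_swap is xs)"
    then obtain "is" where "length is = y" "\<forall>i\<in>set is. Suc i < length xs"
        "sorted_wrt (\<ge>) (fold adj_swap is xs)" by blast
    then show "nat (pairsum ind xs) \<le> y"
      using fold_lower[of "is" xs] pairsum_ind0[of "fold adj_swap is xs"] by simp
  qed
  then show ?thesis using ind_nonneg[of xs] by simp
qed


lemma sum_list_mset_eq:
  "mset xs = mset ys \<Longrightarrow> sum_list (map (h::int \<Rightarrow> int) xs) = sum_list (map h ys)"
  by (metis mset_map sum_mset_sum_list)

lemma absd_sym: "absd a b = absd b a" by (simp add: absd_def)

lemma pairsum_absd_double:
  "2 * pairsum absd xs = sum_list (map (\<lambda>u. sum_list (map (absd u) xs)) xs)"
proof (induction xs)
  case Nil then show ?case by simp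
next
  case (Cons a xs)
  have "sum_list (map (\<lambda>u. sum_list (map (absd u) (a # xs))) xs)
      = sum_list (map (\<lambda>u. absd a u) xs) + sum_list (map (\<lambda>u. sum_list (map (absd u) xs)) xs)"
    by (simp add: sum_list_addf absd_sym)
  moreover have "absd a a = 0" by (simp add: absd_def)
  ultimately show ?case using Cons.IH by simp
qed

lemma pairsum_absd_mset:
  assumes "mset xs = mset ys" shows "pairsum absd xs = pairsum absd ys"
proof -
  have "sum_list (map (\<lambda>u. sum_list (map (absd u) xs)) xs)
      = sum_list (map (\<lambda>u. sum_list (map (absd u) ys)) xs)"
    using sum_list_mset_eq[OF assms] by simp
  also have "\<dots> = sum_list (map (\<lambda>u. sum_list (map (absd u) ys)) ys)"
    by (rule sum_list_mset_eq[OF assms])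
  finally show ?thesis using pairsum_absd_double[of xs] pairsum_absd_double[of ys] by simp
qed

lemma wsum_Cons:
  "(\<Sum>m = 1..Suc k. (a # ys)!(m-1) * int (Suc k - m)) = a * int k + (\<Sum>m = 1..k. ys!(m-1) * int (k - m))"
proof -
  have "(\<Sum>m = 1..Suc k. (a # ys)!(m-1) * int (Suc k - m))
      = a * int k + (\<Sum>m = Suc 1..Suc k. (a # ys)!(m-1) * int (Suc k - m))"
    by (subst sum.atLeast_Suc_atMost) auto
  also have "(\<Sum>m = Suc 1..Suc k. (a # ys)!(m-1) * int (Suc k - m))
      = (\<Sum>m = 1..k. (a # ys)!m * int (k - m))"
    by (subst sum.shift_bounds_cl_Suc_ivl) simp
  also have "\<dots> = (\<Sum>m = 1..k. ys!(m-1) * int (k - m))"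
    by (rule sum.cong) (auto simp: nth_Cons')
  finally show ?thesis .
qed

lemma wsum_sorted:
  "sorted_wrt (\<ge>) ys \<Longrightarrow>
   2 * (\<Sum>m = 1..length ys. ys!(m-1) * int (length ys - m)) = pairsum absd ys + int (length ys - 1) * sum_list ys"
proof (induction ys)
  case Nil then show ?case by simp
next
  case (Cons a ys)
  let ?k = "length ys"
  have "sum_list (map (absd a) ys) = sum_list (map (\<lambda>y. a - y) ys)"
    using Cons.prems by (intro arg_cong[where f=sum_list] map_cong) (auto simp: absd_def)
  also have "\<dots> = int ?k * a - sum_list ys"
    by (simp add: sum_list_subtractf sum_list_triv)
  finally have e: "sum_list (map (absd a) ys) = int ?k * a - sum_list ys" .
  have IH: "2 * (\<Sum>m = 1..?k. ys!(m-1) * int (?k - m)) = pairsum absd ys + int (?k - 1) * sum_list ys"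
    using Cons by simp
  have kk: "int (?k - 1) * sum_list ys = (int ?k - 1) * sum_list ys"
    by (cases ys) auto
  have L: "(\<Sum>m = 1..length (a#ys). (a#ys)!(m-1) * int (length (a#ys) - m))
     = a * int ?k + (\<Sum>m = 1..?k. ys!(m-1) * int (?k - m))"
    using wsum_Cons[where k="?k" and a=a and ys=ys] by simp
  have P: "pairsum absd (a#ys) = (int ?k * a - sum_list ys) + pairsum absd ys" using e by simp
  have Sl: "sum_list (a#ys) = a + sum_list ys" by simp
  have l1: "int (length (a#ys) - 1) = int ?k" by simp
  show ?case unfolding L P Sl l1 using IH kk by (simp add: algebra_simps)
qed

lemma ff_split: "ff a b = absd a b - ind a b"
  by (simp add: ff_def absd_def ind_def)

lemma pairsum_ff: "pairsum ff xs = pairsum absd xs - pairsum ind xs"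
proof -
  have "ff = (\<lambda>a b. absd a b - ind a b)" by (intro ext) (simp add: ff_split)
  show ?thesis unfolding \<open>ff = _\<close> by (rule pairsum_diff)
qed

lemma xvec_simp: "xvec (bs, d, T, t) = take (t - 1) bs @ [d] @ drop (t - 1) bs"
  by (simp add: xvec_def)

lemma class_K_eq:
  assumes "s \<in> aug_states M"
  shows "class_K M s = pairsum ff (xvec s)"
proof -
  obtain bs d T t where s: "s = (bs, d, T, t)" by (cases s) auto
  have len: "length bs = M" and sm: "d + T + sum_list bs = 0" and t: "1 \<le> t" "t \<le> M + 1"
    using assms s by (auto simp: aug_states_def)
  define x where "x = xvec s"
  have lx: "length x = M + 1" using len t by (simp add: x_def s xvec_simp)
  have sx: "sum_list x = - T"
  proof -
    have "sum_list x = sum_list (take (t - 1) bs) + sum_list (drop (t - 1) bs) + d"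
      by (simp add: x_def s xvec_simp)
    also have "sum_list (take (t - 1) bs) + sum_list (drop (t - 1) bs) = sum_list bs"
      by (metis append_take_drop_id sum_list_append)
    finally show ?thesis using sm by simp
  qed
  define bt where "bt = rev (sort x)"
  have mb: "mset bt = mset x" by (simp add: bt_def)
  have lb: "length bt = M + 1" using lx by (simp add: bt_def)
  have sb: "sorted_wrt (\<ge>) bt" by (simp add: bt_def sorted_wrt_rev)
  have sumb: "sum_list bt = sum_list x" using mb by (metis sum_mset_sum_list)
  have W: "2 * (\<Sum>m = 1..M + 1. bt!(m-1) * int (M + 1 - m)) = pairsum absd x + int M * (- T)"
    using wsum_sorted[OF sb] lb sumb sx pairsum_absd_mset[OF mb] by simp
  have "class_K M s = - int (min_adj_swaps x) + int M * T + 2 * (\<Sum>m = 1..M + 1. bt!(m-1) * int (M + 1 - m))"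
    by (simp add: class_K_def s x_def bt_def Let_def)
  also have "\<dots> = pairsum ff x"
    using W by (simp add: min_adj_swaps_eq pairsum_ff algebra_simps)
  finally show ?thesis by (simp add: x_def)
qed



abbreviation FF :: "state \<Rightarrow> int" where "FF s \<equiv> pairsum ff (xvec s)"

lemma bdmD: "(bs, d, T, t) \<in> bdm_states M \<Longrightarrow>
  length bs = M \<and> 1 \<le> t \<and> t \<le> M + 1 \<and> d + T + sum_list bs = 0 \<and> 0 \<le> T \<and> T \<le> int M"
  by (simp add: bdm_states_def aug_states_def)

lemma xvec_D:
  assumes "k < length bs"
  shows "xvec (bs[k := d], bs ! k, T, Suc k + 1) = xvec (bs, d, T, Suc k)"
proof -
  have "take (Suc k) (bs[k := d]) = take k bs @ [d]"
    using assms by (simp add: take_Suc_conv_app_nth take_update_cancel)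
  moreover have "drop (Suc k) (bs[k := d]) = drop (Suc k) bs" by (simp add: drop_update_cancel)
  moreover have "drop k bs = bs ! k # drop (Suc k) bs" using assms by (simp add: Cons_nth_drop_Suc)
  ultimately show ?thesis by (simp add: xvec_simp)
qed

lemma xvec_I:
  assumes "k < length bs"
  shows "xvec (bs, d, T, Suc k + 1) = take k bs @ bs ! k # d # drop (Suc k) bs"
    and "xvec (bs, d, T, Suc k) = take k bs @ d # bs ! k # drop (Suc k) bs"
proof -
  have "take (Suc k) bs = take k bs @ [bs ! k]"
    using assms by (simp add: take_Suc_conv_app_nth)
  then show "xvec (bs, d, T, Suc k + 1) = take k bs @ bs ! k # d # drop (Suc k) bs"
    by (simp add: xvec_simp)
  have "drop k bs = bs ! k # drop (Suc k) bs" using assms by (simp add: Cons_nth_drop_Suc)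
  then show "xvec (bs, d, T, Suc k) = take k bs @ d # bs ! k # drop (Suc k) bs"
    by (simp add: xvec_simp)
qed

lemma ff_shift: "ff (a + 1) (b + 1) = ff a b" by (simp add: ff_def)

lemma step_F:
  assumes "s \<in> bdm_states M" "step M s a s'" "a \<noteq> ActNlt"
  shows "FF s' = FF s + (if a = ActI then 1 else 0)"
proof -
  obtain bs d T t where s: "s = (bs, d, T, t)" by (cases s) auto
  have B: "length bs = M" "1 \<le> t" "t \<le> M + 1" using bdmD assms(1) s by blast+
  show ?thesis
  proof (cases "t \<le> M")
    case True
    define k where "k = t - 1"
    have tk: "t = Suc k" and kl: "k < length bs" using B True by (auto simp: k_def)
    have st: "(bs ! k > d \<and> a = ActD \<and> s' = (bs[k := d], bs ! k, T, Suc k + 1)) \<or>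
          (bs ! k > d \<and> a = ActI \<and> s' = (bs, d, T, Suc k + 1)) \<or>
          (bs ! k = d \<and> a = ActNeq \<and> s' = (bs, d, T, Suc k + 1))"
      using assms(2,3) True B unfolding s tk by auto
    have sw: "FF (bs, d, T, Suc k + 1) = FF s + ff (bs!k) d - ff d (bs!k)"
      unfolding s tk xvec_I[OF kl] by (rule pairsum_mid_swap)
    from st show ?thesis
    proof (elim disjE conjE)
      assume "a = ActD" "s' = (bs[k := d], bs ! k, T, Suc k + 1)"
      then show ?thesis using xvec_D[OF kl] s tk by simp
    next
      assume "bs ! k > d" "a = ActI" "s' = (bs, d, T, Suc k + 1)"
      then show ?thesis using sw by (simp add: ff_def)
    next
      assume "bs ! k = d" "a = ActNeq" "s' = (bs, d, T, Suc k + 1)"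
      then show ?thesis using sw by (simp add: ff_def)
    qed
  next
    case False
    then have t: "t = M + 1" using B by simp
    have xs: "xvec s = bs @ [d]" using B t s by (simp add: xvec_simp)
    have st: "(a = ActDminus \<and> s' = (bs, d - 1, T + 1, 1)) \<or>
              (a = ActBplus \<and> s' = (map (\<lambda>x. x + 1) bs, d, 0, 1))"
      using assms(2) s t by auto
    then show ?thesis
    proof (elim disjE conjE)
      assume a: "a = ActDminus" "s' = (bs, d - 1, T + 1, 1)"
      have "sum_list (map (\<lambda>y. ff y d) bs) = sum_list (map (ff (d - 1)) bs)"
        by (intro arg_cong[where f=sum_list] map_cong) (auto simp: ff_def)
      then show ?thesis using a xs by (simp add: xvec_simp pairsum_snoc)
    next
      assume a: "a = ActBplus" "s' = (map (\<lambda>x. x + 1) bs, d, 0, 1)"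
      have "sum_list (map (ff d) (map (\<lambda>x. x + 1) bs)) = sum_list (map (\<lambda>y. ff y d) bs)"
        by (simp add: o_def) (intro arg_cong[where f=sum_list] map_cong, auto simp: ff_def)
      then show ?thesis using a xs pairsum_shift[of ff bs, OF ff_shift]
        by (simp add: xvec_simp pairsum_snoc)
    qed
  qed
qed

lemma path_end_Cons: "path_end s ((a, s') # rest) = path_end s' rest"
  by (simp add: path_end_def)

lemma count_I_Cons: "count_I ((a, s') # rest) = (if a = ActI then 1 else 0) + count_I rest"
  by (simp add: count_I_def)

lemma path_F:
  "is_path M s p \<Longrightarrow> (\<forall>(a, u)\<in>set p. a \<noteq> ActNlt) \<Longrightarrow>
   int (count_I p) = FF (path_end s p) - FF s"
proof (induction p arbitrary: s)
  case Nil then show ?case by (simp add: count_I_def path_end_def)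
next
  case (Cons au rest)
  obtain a u where au: "au = (a, u)" by (cases au) auto
  have h: "s \<in> bdm_states M" "step M s a u" "is_path M u rest" "a \<noteq> ActNlt"
    using Cons.prems au by auto
  have "int (count_I rest) = FF (path_end u rest) - FF u"
    using Cons.IH[OF h(3)] Cons.prems by auto
  then show ?case using step_F[OF h(1,2,4)] au by (simp add: path_end_Cons count_I_Cons)
qed



definition allowed :: "action set" where
  "allowed = {ActD, ActI, ActNeq, ActDminus, ActBplus}"

definition pred_of :: "nat \<Rightarrow> state \<Rightarrow> state" where
  "pred_of M s = (case s of (bs, d, T, t) \<Rightarrow>
     if 2 \<le> t then (if bs ! (t - 2) < d then (bs[t - 2 := d], bs ! (t - 2), T, t - 1) else (bs, d, T, t - 1))
     else if 1 \<le> T then (bs, d + 1, T - 1, M + 1) else (map (\<lambda>x. x - 1) bs, d, int M, M + 1))"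

definition act_of :: "nat \<Rightarrow> state \<Rightarrow> action" where
  "act_of M s = (case s of (bs, d, T, t) \<Rightarrow>
     if 2 \<le> t then (if bs ! (t - 2) < d then ActD else if bs ! (t - 2) = d then ActNeq else ActI)
     else if 1 \<le> T then ActDminus else ActBplus)"

lemma sum_list_update_int:
  "k < length xs \<Longrightarrow> sum_list (xs[k := x]) = sum_list xs + x - xs ! (k::nat)" for xs :: "int list"
  by (induction xs arbitrary: k) (auto split: nat.splits)

lemma pred_char:
  assumes "u \<in> bdm_states M" "step M u a s" "a \<in> allowed"
  shows "u = pred_of M s \<and> a = act_of M s"
proof -
  obtain bs1 d1 T1 t1 where u: "u = (bs1, d1, T1, t1)" by (cases u) auto
  have B: "length bs1 = M" "1 \<le> t1" "t1 \<le> M + 1" "T1 \<le> int M" "0 \<le> T1"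
    using bdmD assms(1) u by blast+
  show ?thesis
  proof (cases "t1 \<le> M")
    case True
    define k where "k = t1 - 1"
    have tk: "t1 = Suc k" and kl: "k < length bs1" using B True by (auto simp: k_def)
    have st: "(bs1 ! k > d1 \<and> a = ActD \<and> s = (bs1[k := d1], bs1 ! k, T1, Suc k + 1)) \<or>
          (bs1 ! k > d1 \<and> a = ActI \<and> s = (bs1, d1, T1, Suc k + 1)) \<or>
          (bs1 ! k = d1 \<and> a = ActNeq \<and> s = (bs1, d1, T1, Suc k + 1))"
      using assms(2,3) True B unfolding u tk allowed_def by auto
    then show ?thesis
    proof (elim disjE conjE)
      assume h: "bs1 ! k > d1" "a = ActD" "s = (bs1[k := d1], bs1 ! k, T1, Suc k + 1)"
      have "(bs1[k := d1]) ! k = d1" using kl by simp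
      moreover have "(bs1[k := d1])[k := bs1 ! k] = bs1" by simp
      ultimately show ?thesis using h u tk by (simp add: pred_of_def act_of_def)
    next
      assume h: "bs1 ! k > d1" "a = ActI" "s = (bs1, d1, T1, Suc k + 1)"
      then show ?thesis using u tk by (simp add: pred_of_def act_of_def)
    next
      assume h: "bs1 ! k = d1" "a = ActNeq" "s = (bs1, d1, T1, Suc k + 1)"
      then show ?thesis using u tk by (simp add: pred_of_def act_of_def)
    qed
  next
    case False
    then have t: "t1 = M + 1" using B by simp
    have st: "(T1 < int M \<and> a = ActDminus \<and> s = (bs1, d1 - 1, T1 + 1, 1)) \<or>
              (T1 = int M \<and> a = ActBplus \<and> s = (map (\<lambda>x. x + 1) bs1, d1, 0, 1))"
      using assms(2) u t by auto
    then show ?thesis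
    proof (elim disjE conjE)
      assume h: "T1 < int M" "a = ActDminus" "s = (bs1, d1 - 1, T1 + 1, 1)"
      then show ?thesis using u t B by (simp add: pred_of_def act_of_def)
    next
      assume h: "T1 = int M" "a = ActBplus" "s = (map (\<lambda>x. x + 1) bs1, d1, 0, 1)"
      then show ?thesis using u t B by (simp add: pred_of_def act_of_def o_def)
    qed
  qed
qed

lemma pred_step:
  assumes "s \<in> bdm_states M"
  shows "pred_of M s \<in> bdm_states M \<and> step M (pred_of M s) (act_of M s) s \<and> act_of M s \<in> allowed"
proof -
  obtain bs d T t where s: "s = (bs, d, T, t)" by (cases s) auto
  have B: "length bs = M" "1 \<le> t" "t \<le> M + 1" "d + T + sum_list bs = 0" "0 \<le> T" "T \<le> int M"
    using bdmD assms(1) s by blast+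
  show ?thesis
  proof (cases "2 \<le> t")
    case True
    define k where "k = t - 2"
    have tk: "t = Suc (Suc k)" and kl: "k < length bs" using B True by (auto simp: k_def)
    show ?thesis
    proof (cases "bs ! k < d")
      case True
      have su: "sum_list (bs[k := d]) = sum_list bs + d - bs ! k" using kl by (rule sum_list_update_int)
      have "(bs[k := d])[k := bs ! k] = bs" by simp
      then show ?thesis using True B su kl unfolding s tk
        by (simp add: pred_of_def act_of_def bdm_states_def aug_states_def allowed_def)
    next
      case False
      then show ?thesis using B kl unfolding s tk
        by (auto simp: pred_of_def act_of_def bdm_states_def aug_states_def allowed_def)
    qed
  next
    case False
    then have t: "t = 1" using B by simp
    show ?thesis
    proof (cases "1 \<le> T")
      case True
      then show ?thesis using B unfolding s t
        by (auto simp: pred_of_def act_of_def bdm_states_def aug_states_def allowed_def)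
    next
      case False
      have "sum_list (map (\<lambda>x. x - 1) bs) = sum_list bs - int M"
        using B by (simp add: sum_list_subtractf sum_list_triv)
      moreover have "map (\<lambda>x. x + 1) (map (\<lambda>x. x - 1) bs) = bs" by (simp add: o_def)
      ultimately show ?thesis using B False unfolding s t
        by (auto simp: pred_of_def act_of_def bdm_states_def aug_states_def allowed_def)
    qed
  qed
qed

lemma is_path_snoc:
  "is_path M s (p @ [(a, s')]) \<longleftrightarrow>
   is_path M s p \<and> path_end s p \<in> bdm_states M \<and> step M (path_end s p) a s'"
  by (induction p arbitrary: s) (auto simp: path_end_def)

lemma path_end_snoc: "path_end s (p @ [(a, s')]) = s'"
  by (simp add: path_end_def)

lemma good_unique:
  "good_path M s p \<Longrightarrow> good_path M s q \<Longrightarrow> p = q"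
proof (induction p arbitrary: s q rule: rev_induct)
  case Nil
  then have s0: "s = init_state M" by (simp add: good_path_def path_end_def)
  show ?case
  proof (rule ccontr)
    assume "[] \<noteq> q"
    then have "last q \<in> set q" by simp
    moreover have "snd (last q) = s" using Nil.prems(2) \<open>[] \<noteq> q\<close> by (simp add: good_path_def path_end_def)
    ultimately show False using Nil.prems(2) s0 unfolding good_path_def by auto
  qed
next
  case (snoc x p')
  obtain a s' where x: "x = (a, s')" by (cases x) auto
  have ss: "s' = s" using snoc.prems(1) x by (simp add: good_path_def path_end_snoc)
  have sn: "s \<noteq> init_state M" using snoc.prems(1) x ss by (auto simp: good_path_def)
  have "q \<noteq> []" using snoc.prems(2) sn by (auto simp: good_path_def path_end_def)
  then obtain q' y where q: "q = q' @ [y]" by (metis rev_exhaust)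
  obtain a' s'' where y: "y = (a', s'')" by (cases y) auto
  have ss': "s'' = s" using snoc.prems(2) q y by (simp add: good_path_def path_end_snoc)
  have P1: "is_path M (init_state M) p'" "path_end (init_state M) p' \<in> bdm_states M"
    "step M (path_end (init_state M) p') a s" "a \<in> allowed"
    using snoc.prems(1) x ss by (auto simp: good_path_def is_path_snoc allowed_def)
  have P2: "is_path M (init_state M) q'" "path_end (init_state M) q' \<in> bdm_states M"
    "step M (path_end (init_state M) q') a' s" "a' \<in> allowed"
    using snoc.prems(2) q y ss' by (auto simp: good_path_def is_path_snoc allowed_def)
  have e1: "path_end (init_state M) p' = pred_of M s" "a = act_of M s" using pred_char[OF P1(2-4)] by auto
  have e2: "path_end (init_state M) q' = pred_of M s" "a' = act_of M s" using pred_char[OF P2(2-4)] by auto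
  have g1: "good_path M (pred_of M s) p'" using snoc.prems(1) P1(1) e1 by (auto simp: good_path_def)
  have g2: "good_path M (pred_of M s) q'" using snoc.prems(2) P2(1) e2 q by (auto simp: good_path_def)
  have "p' = q'" by (rule snoc.IH[OF g1 g2])
  then show ?case using x y q ss ss' e1 e2 by simp
qed



definition ps :: "int list \<Rightarrow> nat \<Rightarrow> bool" where
  "ps x t = (\<forall>i. Suc i < t \<longrightarrow> x ! i \<le> x ! Suc i)"

definition rs :: "int list \<Rightarrow> bool" where
  "rs x = (sorted (tl x) \<and> (\<forall>z\<in>set (tl x). z \<le> hd x + 1))"

definition m1 :: "nat \<Rightarrow> state \<Rightarrow> nat" where
  "m1 M s = (case s of (bs, d, T, t) \<Rightarrow>
     if \<not> ps (xvec s) t then t else if \<not> rs (xvec s) then t + (M + 1) else t + 2 * (M + 1))"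

definition mu0 :: "nat \<Rightarrow> state \<Rightarrow> nat" where
  "mu0 M s = (case s of (bs, d, T, t) \<Rightarrow>
     if T = 0 then (M + 1) * M + t else (M + 1) * (nat T - 1) + t)"

definition mm :: "nat \<Rightarrow> state \<Rightarrow> nat" where
  "mm M s = (if FF s = 0 then mu0 M s else m1 M s)"

definition BIG :: "nat \<Rightarrow> nat" where "BIG M = 4 * (M + 1) * (M + 1)"

definition mu :: "nat \<Rightarrow> state \<Rightarrow> nat" where
  "mu M s = nat (FF s) * BIG M + mm M s"

lemma ps_Suc: "ps x (Suc (Suc k)) = (ps x (Suc k) \<and> x ! k \<le> x ! Suc k)"
  by (auto simp: ps_def less_Suc_eq)

lemma FF_nonneg: "FF s \<ge> 0"
  by (rule pairsum_nonneg) (simp add: ff_def)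

lemma mm_bound:
  assumes "s \<in> bdm_states M" shows "mm M s < BIG M"
proof -
  obtain bs d T t where s: "s = (bs, d, T, t)" by (cases s) auto
  have B: "t \<le> M + 1" "T \<le> int M" "0 \<le> T" using bdmD assms s by blast+
  have "m1 M s \<le> 3 * (M + 1)" using B by (simp add: m1_def s)
  moreover have "mu0 M s \<le> (M + 1) * (M + 1)"
  proof -
    have "nat T - 1 \<le> M" using B by simp
    then have "(M + 1) * (nat T - 1) \<le> (M + 1) * M" by (rule mult_le_mono2)
    then show ?thesis using B by (simp add: mu0_def s algebra_simps)
  qed
  ultimately show ?thesis by (auto simp: mm_def BIG_def algebra_simps)
qed

lemma flat0:
  "sorted xs \<Longrightarrow> (\<forall>z\<in>set xs. c \<le> z \<and> z \<le> c + 1) \<Longrightarrow> pairsum ff xs = 0"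
proof (induction xs)
  case Nil then show ?case by simp
next
  case (Cons a xs)
  have "\<forall>y\<in>set xs. ff a y = 0" using Cons.prems by (auto simp: ff_def)
  then have "sum_list (map (ff a) xs) = sum_list (map (\<lambda>_. 0::int) xs)"
    by (intro arg_cong[where f=sum_list] map_cong) auto
  then have "sum_list (map (ff a) xs) = 0" by (simp only: sum_list_0)
  then show ?case using Cons by simp
qed

lemma step_xvec:
  assumes "u \<in> bdm_states M" "step M u a s" "a = ActD \<or> a = ActNeq"
  shows "xvec s = xvec u"
proof -
  obtain bs1 d1 T1 t1 where u: "u = (bs1, d1, T1, t1)" by (cases u) auto
  have B: "length bs1 = M" "1 \<le> t1" "t1 \<le> M + 1" using bdmD assms(1) u by blast+
  have tl: "t1 \<le> M" using assms(2,3) u by auto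
  define k where "k = t1 - 1"
  have tk: "t1 = Suc k" and kl: "k < length bs1" using B tl by (auto simp: k_def)
  have "(a = ActD \<and> s = (bs1[k := d1], bs1 ! k, T1, Suc k + 1)) \<or>
        (bs1 ! k = d1 \<and> s = (bs1, d1, T1, Suc k + 1))"
    using assms(2,3) unfolding u tk by auto
  then show ?thesis
  proof (elim disjE conjE)
    assume "a = ActD" "s = (bs1[k := d1], bs1 ! k, T1, Suc k + 1)"
    then show ?thesis using xvec_D[OF kl] u tk by simp
  next
    assume "bs1 ! k = d1" "s = (bs1, d1, T1, Suc k + 1)"
    then show ?thesis using xvec_I[OF kl] u tk by simp
  qed
qed

lemma sum_bounds:
  "(\<forall>y\<in>set bs. d \<le> y \<and> y \<le> d + 1) \<Longrightarrow>
   int (length bs) * d \<le> sum_list bs \<and> sum_list bs \<le> int (length bs) * (d + 1)"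
  for bs :: "int list"
  by (induction bs) (auto simp: algebra_simps)

lemma nonpos_sum0:
  "(\<forall>y\<in>set ys. y \<le> (0::int)) \<Longrightarrow> sum_list ys = 0 \<Longrightarrow> (\<forall>y\<in>set ys. y = 0)"
proof (induction ys)
  case Nil then show ?case by simp
next
  case (Cons a ys)
  have "sum_list ys \<le> 0" using Cons.prems(1) by (induction ys) auto
  then show ?case using Cons by auto
qed

lemma zero_struct:
  assumes M: "M \<ge> 1" and s: "(bs, d, 1, 1) \<in> bdm_states M" and F: "FF (bs, d, 1, 1) = 0"
  shows "bs = replicate M 0 \<and> d = -1"
proof -
  have B: "length bs = M" "d + 1 + sum_list bs = 0" using bdmD[OF s] by auto
  have x: "xvec (bs, d, 1, 1) = d # bs" by (simp add: xvec_simp)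
  have n1: "sum_list (map (ff d) bs) \<ge> 0" by (auto intro!: sum_list_nonneg simp: ff_def)
  have n2: "pairsum ff bs \<ge> 0" by (rule pairsum_nonneg) (simp add: ff_def)
  have "sum_list (map (ff d) bs) = 0" using F n1 n2 x by simp
  then have "\<forall>y\<in>set (map (ff d) bs). y = 0"
    by (subst (asm) sum_list_nonneg_eq_0_iff) (auto simp: ff_def)
  then have z: "\<forall>y\<in>set bs. ff d y = 0" by simp
  have r: "\<forall>y\<in>set bs. d \<le> y \<and> y \<le> d + 1"
  proof
    fix y assume "y \<in> set bs"
    then have "ff d y = 0" using z by blast
    then show "d \<le> y \<and> y \<le> d + 1" by (auto simp: ff_def split: if_splits)
  qed
  from sum_bounds[OF r] B have sb: "int M * d \<le> - 1 - d" "- 1 - d \<le> int M * (d + 1)" by auto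
  have d: "d = -1"
  proof (rule ccontr)
    assume "d \<noteq> -1"
    then consider "d \<ge> 0" | "d \<le> -2" by linarith
    then show False
    proof cases
      case 1
      then have "int M * d \<ge> 0" by simp
      then show False using sb 1 by linarith
    next
      case 2
      then have "int M * (d + 1) \<le> int M * (-1)" by (intro mult_left_mono) auto
      then show False using sb 2 M by linarith
    qed
  qed
  have "\<forall>y\<in>set bs. y \<le> 0" using r d by auto
  moreover have "sum_list bs = 0" using B d by simp
  ultimately have "\<forall>y\<in>set bs. y = 0" by (rule nonpos_sum0)
  then have "replicate (length bs) 0 = bs" by (rule replicate_length_same)
  then show ?thesis using B d by simp
qed



lemma ps_sorted: "length xs = n \<Longrightarrow> ps xs n = sorted xs"
  by (simp add: ps_def sorted_iff_nth_Suc)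

lemma round_case:
  assumes M: "M \<ge> 1" and bs: "length bs = M"
    and xu: "length xu = M + 1" "sorted xu \<longleftrightarrow> rs (d # bs)"
    and flat: "rs (d # bs) \<Longrightarrow> rs xu \<Longrightarrow> d \<le> hd bs"
    and FFu: "pairsum ff xu = pairsum ff (d # bs)"
    and nz: "pairsum ff (d # bs) \<noteq> 0"
  shows "(if \<not> ps xu (M + 1) then M + 1 else if \<not> rs xu then M + 1 + (M + 1) else M + 1 + 2 * (M + 1))
       < (if \<not> ps (d # bs) 1 then 1 else if \<not> rs (d # bs) then 1 + (M + 1) else 1 + 2 * (M + 1))"
proof -
  have p1: "ps (d # bs) 1" by (simp add: ps_def)
  have pu: "ps xu (M + 1) = rs (d # bs)" using ps_sorted[OF xu(1)] xu(2) by simp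
  have "\<not> (rs (d # bs) \<and> rs xu)"
  proof
    assume h: "rs (d # bs) \<and> rs xu"
    obtain h0 r where b: "bs = h0 # r" using bs M by (cases bs) auto
    have dh: "d \<le> h0" using flat h b by auto
    have r1: "sorted bs" "\<forall>z\<in>set bs. z \<le> d + 1" using h by (auto simp: rs_def)
    have "sorted (d # bs)" using r1 dh b by auto
    moreover have "\<forall>z\<in>set (d # bs). d \<le> z \<and> z \<le> d + 1" using r1 dh b by auto
    ultimately have "pairsum ff (d # bs) = 0" by (rule flat0)
    then show False using nz by simp
  qed
  then show ?thesis using p1 pu by auto
qed

lemma mm_dec:
  assumes M: "M \<ge> 1" and s: "s \<in> bdm_states M" and a: "act_of M s \<noteq> ActI"
    and u0: "pred_of M s \<noteq> init_state M"
  shows "mm M (pred_of M s) < mm M s"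
proof -
  define u where "u = pred_of M s"
  have P: "u \<in> bdm_states M" "step M u (act_of M s) s" "act_of M s \<in> allowed"
    using pred_step[OF s] by (auto simp: u_def)
  have FFe: "FF u = FF s" using step_F[OF P(1,2)] a P(3) by (auto simp: allowed_def)
  obtain bs d T t where st: "s = (bs, d, T, t)" by (cases s) auto
  have B: "length bs = M" "1 \<le> t" "t \<le> M + 1" "d + T + sum_list bs = 0" "0 \<le> T" "T \<le> int M"
    using bdmD s st by blast+
  have "mm M u < mm M s"
  proof (cases "2 \<le> t")
    case True
    define k where "k = t - 2"
    have tk: "t = Suc (Suc k)" and kl: "Suc k \<le> length bs" using B True by (auto simp: k_def)
    have nI: "bs ! k \<le> d" using a True unfolding st by (auto simp: act_of_def k_def split: if_splits)
    have aDN: "act_of M s = ActD \<or> act_of M s = ActNeq" using a True unfolding st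
      by (auto simp: act_of_def split: if_splits)
    have xe: "xvec s = xvec u" by (rule step_xvec[OF P(1,2) aDN])
    obtain bs' d' where ue: "u = (bs', d', T, Suc k)"
      unfolding u_def st tk by (cases "bs ! k < d") (auto simp: pred_of_def)
    define x where "x = xvec s"
    have xd: "x = take (Suc k) bs @ [d] @ drop (Suc k) bs" by (simp add: x_def st tk xvec_simp)
    have "x ! k = bs ! k" "x ! Suc k = d" using kl unfolding xd by (auto simp: nth_append)
    then have pse: "ps x (Suc (Suc k)) = ps x (Suc k)" using nI by (simp add: ps_Suc)
    have xu: "xvec u = x" using xe x_def by simp
    show ?thesis
    proof (cases "FF s = 0")
      case True
      then show ?thesis using FFe unfolding mm_def by (simp add: mu0_def ue st tk)
    next
      case False
      have xu': "xvec (bs', d', T, Suc k) = xvec (bs, d, T, Suc (Suc k))" using xe ue st tk by simp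
      have pse': "ps (xvec (bs,d,T,Suc (Suc k))) (Suc (Suc k)) = ps (xvec (bs,d,T,Suc (Suc k))) (Suc k)"
        using pse x_def st tk by simp
      show ?thesis using FFe False unfolding mm_def
        by (simp add: m1_def ue st tk xu' pse')
    qed
  next
    case False
    then have t1: "t = 1" using B by simp
    have xs: "xvec s = d # bs" by (simp add: st t1 xvec_simp)
    show ?thesis
    proof (cases "1 \<le> T")
      case True
      have ue: "u = (bs, d + 1, T - 1, M + 1)" unfolding u_def st t1 using True by (simp add: pred_of_def)
      have xue: "xvec u = bs @ [d + 1]" using B by (simp add: ue xvec_simp)
      show ?thesis
      proof (cases "FF s = 0")
        case F0: True
        show ?thesis
        proof (cases "T = 1")
          case True
          have "bs = replicate M 0 \<and> d = -1"
            using zero_struct[OF M] s F0 unfolding st t1 True by blast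
          then have "u = init_state M" using ue True by (simp add: init_state_def)
          then show ?thesis using u0 u_def by simp
        next
          case False
          then have T2: "T \<ge> 2" using \<open>1 \<le> T\<close> by simp
          define j where "j = nat T - 2"
          have j1: "nat T = j + 2" and j2: "nat (T - 1) = j + 1" using T2 by (auto simp: j_def)
          have "mu0 M u = (M + 1) * j + (M + 1)" using T2 by (simp add: mu0_def ue j2)
          moreover have "mu0 M s = (M + 1) * (j + 1) + 1" using T2 by (simp add: mu0_def st t1 j1)
          ultimately show ?thesis using F0 FFe unfolding mm_def by simp
        qed
      next
        case F1: False
        have mu_eq: "m1 M u = (if \<not> ps (bs @ [d + 1]) (M + 1) then M + 1 else if \<not> rs (bs @ [d + 1]) then M + 1 + (M + 1) else M + 1 + 2 * (M + 1))"
          by (simp only: m1_def ue prod.case xue[unfolded ue])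
        have ms_eq: "m1 M s = (if \<not> ps (d # bs) 1 then 1 else if \<not> rs (d # bs) then 1 + (M + 1) else 1 + 2 * (M + 1))"
          by (simp only: m1_def st t1 prod.case xs[unfolded st t1])
        have "m1 M u < m1 M s"
          unfolding mu_eq ms_eq
        proof (rule round_case[OF M B(1)])
          show "length (bs @ [d + 1]) = M + 1" using B by simp
          show "sorted (bs @ [d + 1]) = rs (d # bs)" by (auto simp: rs_def sorted_append)
          show "d \<le> hd bs" if "rs (d # bs)" "rs (bs @ [d + 1])"
            using that M B(1) by (cases bs) (auto simp: rs_def)
          show "pairsum ff (bs @ [d + 1]) = pairsum ff (d # bs)" using FFe xue xs by simp
          show "pairsum ff (d # bs) \<noteq> 0" using F1 xs by simp
        qed
        then show ?thesis using F1 FFe unfolding mm_def by simp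
      qed
    next
      case False
      then have T0: "T = 0" using B by simp
      have ue: "u = (map (\<lambda>x. x - 1) bs, d, int M, M + 1)" unfolding u_def st t1 using T0 by (simp add: pred_of_def)
      have xue: "xvec u = map (\<lambda>x. x - 1) bs @ [d]" using B by (simp add: ue xvec_simp)
      show ?thesis
      proof (cases "FF s = 0")
        case F0: True
        have "(M + 1) * (M - 1) + (M + 1) = (M + 1) * M" using M
          by (metis Suc_diff_1 add.commute less_le_trans mult_Suc_right zero_less_one)
        then show ?thesis using F0 FFe M T0 unfolding mm_def
          by (simp add: mu0_def ue st t1)
      next
        case F1: False
        have mu_eq: "m1 M u = (if \<not> ps (map (\<lambda>x. x - 1) bs @ [d]) (M + 1) then M + 1 else if \<not> rs (map (\<lambda>x. x - 1) bs @ [d]) then M + 1 + (M + 1) else M + 1 + 2 * (M + 1))"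
          by (simp only: m1_def ue prod.case xue[unfolded ue])
        have ms_eq: "m1 M s = (if \<not> ps (d # bs) 1 then 1 else if \<not> rs (d # bs) then 1 + (M + 1) else 1 + 2 * (M + 1))"
          by (simp only: m1_def st t1 prod.case xs[unfolded st t1])
        have "m1 M u < m1 M s"
          unfolding mu_eq ms_eq
        proof (rule round_case[OF M B(1)])
          show "length (map (\<lambda>x. x - 1) bs @ [d]) = M + 1" using B by simp
          show "sorted (map (\<lambda>x. x - 1) bs @ [d]) = rs (d # bs)"
          proof -
            have "sorted (map (\<lambda>x. x - 1) bs) = sorted bs" by (auto simp: sorted_iff_nth_Suc)
            then show ?thesis by (auto simp: rs_def sorted_append)
          qed
          show "d \<le> hd bs" if "rs (d # bs)" "rs (map (\<lambda>x. x - 1) bs @ [d])"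
            using that M B(1) by (cases bs) (auto simp: rs_def)
          show "pairsum ff (map (\<lambda>x. x - 1) bs @ [d]) = pairsum ff (d # bs)" using FFe xue xs by simp
          show "pairsum ff (d # bs) \<noteq> 0" using F1 xs by simp
        qed
        then show ?thesis using F1 FFe unfolding mm_def by simp
      qed
    qed
  qed
  then show ?thesis by (simp add: u_def)
qed



lemma mu_dec:
  assumes M: "M \<ge> 1" and s: "s \<in> bdm_states M" and u0: "pred_of M s \<noteq> init_state M"
  shows "mu M (pred_of M s) < mu M s"
proof -
  define u where "u = pred_of M s"
  have P: "u \<in> bdm_states M" "step M u (act_of M s) s" "act_of M s \<in> allowed"
    using pred_step[OF s] by (auto simp: u_def)
  have FFe: "FF s = FF u + (if act_of M s = ActI then 1 else 0)"
    using step_F[OF P(1,2)] P(3) by (auto simp: allowed_def)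
  show ?thesis
  proof (cases "act_of M s = ActI")
    case True
    then have "nat (FF s) = nat (FF u) + 1" using FFe FF_nonneg[of u] by simp
    moreover have "mm M u < BIG M" by (rule mm_bound[OF P(1)])
    ultimately have "mu M u < mu M s" unfolding mu_def by (simp add: algebra_simps)
    then show ?thesis by (simp add: u_def)
  next
    case False
    then have "FF s = FF u" using FFe by simp
    moreover have "mm M u < mm M s" using mm_dec[OF M s False u0] by (simp add: u_def)
    ultimately have "mu M u < mu M s" unfolding mu_def by simp
    then show ?thesis by (simp add: u_def)
  qed
qed

lemma init_bdm: "init_state M \<in> bdm_states M"
  by (simp add: init_state_def bdm_states_def aug_states_def sum_list_replicate)

lemma good_exists:
  assumes M: "M \<ge> 1" shows "s \<in> bdm_states M \<Longrightarrow> \<exists>p. good_path M s p"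
proof (induction "mu M s" arbitrary: s rule: less_induct)
  case less
  show ?case
  proof (cases "s = init_state M")
    case True
    then show ?thesis by (intro exI[of _ "[]"]) (simp add: good_path_def path_end_def)
  next
    case sn: False
    define u where "u = pred_of M s"
    have P: "u \<in> bdm_states M" "step M u (act_of M s) s" "act_of M s \<in> allowed"
      using pred_step[OF less.prems] by (auto simp: u_def)
    show ?thesis
    proof (cases "u = init_state M")
      case True
      then show ?thesis using P sn
        by (intro exI[of _ "[(act_of M s, s)]"]) (auto simp: good_path_def path_end_def allowed_def)
    next
      case False
      have "mu M u < mu M s" using mu_dec[OF M less.prems] False by (simp add: u_def)
      then obtain p where p: "good_path M u p" using less.hyps P(1) by blast
      have "good_path M s (p @ [(act_of M s, s)])"
        using p P sn by (auto simp: good_path_def is_path_snoc path_end_snoc allowed_def)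
      then show ?thesis by blast
    qed
  qed
qed

lemma FF_init: "FF (init_state M) = 0"
proof -
  have "xvec (init_state M) = replicate M 0 @ [0]" by (simp add: init_state_def xvec_simp)
  also have "\<dots> = replicate (Suc M) 0" by (simp add: replicate_append_same)
  finally have x: "xvec (init_state M) = replicate (Suc M) 0" .
  have "pairsum ff (replicate (Suc M) 0) = 0" by (rule flat0[where c=0]) auto
  then show ?thesis using x by simp
qed

theorem mainTheorem5:
  fixes M q :: nat and s :: state
  assumes "M \<ge> 1" and "q \<ge> 2" and "s \<in> bdm_states M"
  shows "int (count_I (alpha M s)) = class_K M s"
proof -
  have ex: "\<exists>!p. good_path M s p"
    using good_exists[OF assms(1) assms(3)] good_unique by blast
  have g: "good_path M s (alpha M s)" unfolding alpha_def by (rule theI'[OF ex])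
  have np: "\<forall>(a, u)\<in>set (alpha M s). a \<noteq> ActNlt" using g by (auto simp: good_path_def)
  have "int (count_I (alpha M s)) = FF (path_end (init_state M) (alpha M s)) - FF (init_state M)"
    using path_F[of M "init_state M" "alpha M s"] g np by (auto simp: good_path_def)
  also have "\<dots> = FF s" using g FF_init by (simp add: good_path_def)
  also have "\<dots> = class_K M s"
  proof -
    have "s \<in> aug_states M" using assms(3) by (cases s) (auto simp: bdm_states_def)
    then show ?thesis using class_K_eq[of s M] by simp
  qed
  finally show ?thesis .
qed

end
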